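(* Let $\hat H_n=2^{-n}H_n$ be the monic Hermite polynomials, and let $(\rho_n)_{n\ge0}$ be positive real numbers such that, for some $0\le\nu\le1/4$, $$\frac{2\rho_{n-1}}{\rho_n}\le n^\nu,\quad n\ge1.$$ Let $K$ be a positive integer and $\gamma_0,\dots,\gamma_K$ real numbers with $\gamma_0=1$, $\gamma_K\neq0$. Then the polynomial $$q_n(x)=\sum_{j=0}^K\gamma_j\rho_{n-j}\hat H_{n-j}(x)$$ has only real zeros for $$n\ge\max\left\{6^{2\nu}\left(\frac{6^{\nu(K-1)}-1}{6^\nu-1}\right)^24^{K-2}\max{}^2\{|\gamma_j|:2\le j\le K\},\ 2K\right\}.$$ Moreover, the zeros are simple and interlace the zeros of $H_{n-1}$.
   Context: $H_n$ denotes the Hermite polynomial of degree $n$ (orthogonal with respect to $e^{-x^2}dx$ on $\mathbb{R}$, leading coefficient $2^n$); the monic ones satisfy $x\hat H_n=\hat H_{n+1}+\frac n2\hat H_{n-1}$. When $\nu=0$ the quotient $\frac{6^{\nu(K-1)}-1}{6^\nu-1}$ is to be read as $\sum_{j=0}^{K-2}6^{\nu j}=K-1$. Interlacing: given two finite sets $U,V$ of reals, $U$ interlaces $V$ if $\min U<\min V$ and between any two consecutive elements of either set there is an element of the other; here $U$ is the zero set of $q_n$ and $V$ that of $H_{n-1}$. *)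

theory Defs
  imports "HOL-Computational_Algebra.Polynomial" Complex_Main
begin

fun monic_hermite :: "nat \<Rightarrow> real poly" where
  "monic_hermite 0 = 1"
| "monic_hermite (Suc 0) = [:0, 1:]"
| "monic_hermite (Suc (Suc n)) =
     [:0, 1:] * monic_hermite (Suc n) - smult ((real n + 1) / 2) (monic_hermite n)"

definition hermite :: "nat \<Rightarrow> real poly" where
  "hermite n = smult (2 ^ n) (monic_hermite n)"

definition interlaces :: "real set \<Rightarrow> real set \<Rightarrow> bool" where
  "interlaces U V \<longleftrightarrow>
     finite U \<and> finite V \<and> U \<noteq> {} \<and> V \<noteq> {} \<and> Min U < Min V \<and>
     (\<forall>a\<in>U. \<forall>b\<in>U. a < b \<and> (\<forall>c\<in>U. \<not> (a < c \<and> c < b)) \<longrightarrow> (\<exists>v\<in>V. a < v \<and> v < b)) \<and>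
     (\<forall>a\<in>V. \<forall>b\<in>V. a < b \<and> (\<forall>c\<in>V. \<not> (a < c \<and> c < b)) \<longrightarrow> (\<exists>u\<in>U. a < u \<and> u < b))"

text \<open>The quotient (6^(nu(K-1)) - 1)/(6^nu - 1), read as K-1 when nu = 0.\<close>
definition geom_quot :: "real \<Rightarrow> nat \<Rightarrow> real" where
  "geom_quot \<nu> K = (if \<nu> = 0 then real K - 1
                     else (6 powr (\<nu> * (real K - 1)) - 1) / (6 powr \<nu> - 1))"

definition q_poly :: "(nat \<Rightarrow> real) \<Rightarrow> (nat \<Rightarrow> real) \<Rightarrow> nat \<Rightarrow> nat \<Rightarrow> real poly" where
  "q_poly \<gamma> \<rho> K n = (\<Sum>j\<le>K. smult (\<gamma> j * \<rho> (n - j)) (monic_hermite (n - j)))"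

end

theory Submission
  imports Defs
begin

lemma prod_roots_dvd:
  fixes p :: "'a::idom poly" and N k :: nat
  assumes "inj_on w {..<N}" "\<forall>i<N. poly p (w i) = 0"
  shows "k \<le> N \<Longrightarrow> (\<Prod>i<k. [:- w i, 1:]) dvd p"
proof (induction k)
  case 0
  then show ?case by simp
next
  case (Suc k)
  then obtain r where r: "p = (\<Prod>i<k. [:- w i, 1:]) * r" by (auto elim: dvdE)
  have "poly p (w k) = 0" using assms Suc by auto
  hence "(\<Prod>i<k. (w k - w i)) * poly r (w k) = 0" by (simp add: r poly_prod)
  moreover have "(\<Prod>i<k. (w k - w i)) \<noteq> 0"
  proof -
    have "w k \<noteq> w i" if "i < k" for i
    proof
      assume "w k = w i"
      moreover have "i \<in> {..<N}" "k \<in> {..<N}" using that Suc.prems by auto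
      ultimately have "k = i" using inj_onD[OF assms(1)] by metis
      thus False using that by simp
    qed
    thus ?thesis by (simp add: prod_zero_iff)
  qed
  ultimately have "poly r (w k) = 0" by simp
  then obtain s where "r = [:- w k, 1:] * s" by (auto simp: poly_eq_0_iff_dvd elim: dvdE)
  hence "p = ((\<Prod>i<k. [:- w i, 1:]) * [:- w k, 1:]) * s" by (simp only: r mult.assoc)
  hence "p = (\<Prod>i<Suc k. [:- w i, 1:]) * s" by (simp only: prod.lessThan_Suc)
  thus ?case by simp
qed

lemma prod_roots:
  fixes p :: "'a::idom poly" and N :: nat
  assumes "degree p = N" "p \<noteq> 0" "inj_on w {..<N}" "\<forall>i<N. poly p (w i) = 0"
  shows "p = smult (lead_coeff p) (\<Prod>i<N. [:- w i, 1:])"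
proof -
  obtain r where r: "p = (\<Prod>i<N. [:- w i, 1:]) * r"
    using prod_roots_dvd[OF assms(3,4), of N] by (auto elim: dvdE)
  have P0: "(\<Prod>i<N. [:- w i, 1:]) \<noteq> (0::'a poly)" by (simp add: prod_zero_iff)
  have dP: "degree (\<Prod>i<N. [:- w i, 1:]) = N"
    by (subst degree_prod_eq_sum_degree) auto
  have lP: "lead_coeff (\<Prod>i<N. [:- w i, 1:]) = 1"
    by (simp add: lead_coeff_prod)
  have "r \<noteq> 0" using assms(2) r by auto
  hence "degree p = N + degree r" using r P0 dP by (simp add: degree_mult_eq)
  hence "degree r = 0" using assms(1) by simp
  then obtain c where c: "r = [:c:]" by (metis degree_eq_zeroE)
  have "lead_coeff p = c" using r c lP by (simp add: lead_coeff_mult)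
  thus ?thesis using r c by (simp add: lP)
qed

lemma prod_roots_zero_iff:
  fixes c :: "'a::idom" and N :: nat
  assumes "c \<noteq> 0"
  shows "poly (smult c (\<Prod>i<N. [:- w i, 1:])) z = 0 \<longleftrightarrow> (\<exists>i<N. z = w i)"
  using assms by (auto simp: poly_prod prod_zero_iff)

lemma prod_roots_simple:
  fixes c :: "'a::idom" and N :: nat
  assumes "c \<noteq> 0" "inj_on w {..<N}" "poly (smult c (\<Prod>i<N. [:- w i, 1:])) z = 0"
  shows "poly (pderiv (smult c (\<Prod>i<N. [:- w i, 1:]))) z \<noteq> 0"
proof -
  obtain i where i: "i < N" "z = w i" using prod_roots_zero_iff[OF assms(1)] assms(3) by blast
  define R where "R = (\<Prod>k\<in>{..<N} - {i}. [:- w k, 1:])"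
  have split: "(\<Prod>k<N. [:- w k, 1:]) = [:- w i, 1:] * R"
    unfolding R_def using i by (subst prod.remove[of _ i]) auto
  have "poly R (w i) \<noteq> 0"
  proof -
    have "w i \<noteq> w k" if "k \<in> {..<N} - {i}" for k
      using assms(2) that i by (auto simp: inj_on_def)
    thus ?thesis unfolding R_def by (simp add: poly_prod prod_zero_iff)
  qed
  moreover have "poly (pderiv ([:- w i, 1:] * R)) (w i) = poly R (w i)"
  proof -
    have "pderiv ([:- w i, 1:] * R) = [:- w i, 1:] * pderiv R + R * pderiv [:- w i, 1:]"
      by (rule pderiv_mult)
    moreover have "pderiv [:- w i, 1:] = 1" by (simp add: pderiv_pCons)
    ultimately show ?thesis by simp
  qed
  ultimately show ?thesis using assms(1) i by (simp add: split pderiv_smult)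
qed

lemma sign_prod:
  fixes w :: "nat \<Rightarrow> real" and N :: nat
  assumes "\<forall>k<N. t \<noteq> w k"
  shows "(-1) ^ card {k. k < N \<and> t < w k} * (\<Prod>k<N. (t - w k)) > 0"
  using assms
proof (induction N)
  case 0
  then show ?case by simp
next
  case (Suc N)
  have IH: "(-1) ^ card {k. k < N \<and> t < w k} * (\<Prod>k<N. (t - w k)) > 0"
    using Suc by auto
  show ?case
  proof (cases "t < w N")
    case True
    have "{k. k < Suc N \<and> t < w k} = insert N {k. k < N \<and> t < w k}"
      using True by auto
    hence c: "card {k. k < Suc N \<and> t < w k} = Suc (card {k. k < N \<and> t < w k})" by simp
    have "(-1) ^ card {k. k < Suc N \<and> t < w k} * (\<Prod>k<Suc N. (t - w k))
       = ((-1) ^ card {k. k < N \<and> t < w k} * (\<Prod>k<N. (t - w k))) * (w N - t)"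
      by (simp only: c prod.lessThan_Suc power_Suc) (simp add: algebra_simps)
    moreover have "((-1) ^ card {k. k < N \<and> t < w k} * (\<Prod>k<N. (t - w k))) * (w N - t) > 0"
      using IH True by simp
    ultimately show ?thesis by linarith
  next
    case False
    hence F: "t > w N" using Suc.prems by force
    have "{k. k < Suc N \<and> t < w k} = {k. k < N \<and> t < w k}"
      using False less_Suc_eq by auto
    hence "(-1) ^ card {k. k < Suc N \<and> t < w k} * (\<Prod>k<Suc N. (t - w k))
       = ((-1) ^ card {k. k < N \<and> t < w k} * (\<Prod>k<N. (t - w k))) * (t - w N)"
      by (simp add: algebra_simps)
    moreover have "((-1) ^ card {k. k < N \<and> t < w k} * (\<Prod>k<N. (t - w k))) * (t - w N) > 0"
      using IH F by simp
    ultimately show ?thesis by linarith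
  qed
qed

lemma poly_infty_signs:
  fixes p :: "real poly"
  assumes "lead_coeff p > 0"
  shows "\<exists>B. \<forall>x. (x \<ge> B \<longrightarrow> poly p x > 0) \<and> (x \<le> - B \<longrightarrow> (-1) ^ degree p * poly p x > 0)"
proof -
  obtain n1 where n1: "\<forall>x\<ge>n1. poly p x \<ge> lead_coeff p" using poly_pinfty_gt_lc[OF assms] by blast
  define p2 where "p2 = smult ((-1) ^ degree p) (pcompose p [:0, -1:])"
  have "lead_coeff (pcompose p [:0, -1:]) = lead_coeff p * (-1) ^ degree p"
    by (subst lead_coeff_comp) auto
  hence "lead_coeff p2 = lead_coeff p"
    by (simp add: p2_def flip: power_mult_distrib)
  then obtain n2 where n2: "\<forall>x\<ge>n2. poly p2 x \<ge> lead_coeff p" using poly_pinfty_gt_lc assms by metis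
  have "poly p2 x = (-1) ^ degree p * poly p (- x)" for x
    by (simp add: p2_def poly_pcompose)
  show ?thesis
  proof (intro exI[of _ "max n1 n2"] allI conjI impI)
    fix x assume "max n1 n2 \<le> x" thus "poly p x > 0" using n1 assms by force
  next
    fix x assume "x \<le> - max n1 n2"
    hence "-x \<ge> n2" by simp
    hence "poly p2 (-x) > 0" using n2 assms by force
    thus "(-1) ^ degree p * poly p x > 0" by (simp add: p2_def poly_pcompose)
  qed
qed

lemma sorted_from_succ:
  fixes f :: "nat \<Rightarrow> real"
  assumes "\<forall>i. Suc i < N \<longrightarrow> f i < f (Suc i)"
  shows "i < j \<Longrightarrow> j < N \<Longrightarrow> f i < f j"
proof (induction j)
  case 0 then show ?case by simp
next
  case (Suc j)
  show ?case
  proof (cases "i = j")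
    case True then show ?thesis using assms Suc by auto
  next
    case False then show ?thesis using Suc assms by (metis less_SucE less_trans Suc_lessD)
  qed
qed

lemma sorted_inj:
  fixes f :: "nat \<Rightarrow> real"
  assumes "\<forall>i. Suc i < N \<longrightarrow> f i < f (Suc i)"
  shows "inj_on f {..<N}"
proof (rule inj_onI)
  fix i j assume ij: "i \<in> {..<N}" "j \<in> {..<N}" "f i = f j"
  show "i = j"
  proof (rule ccontr)
    assume "i \<noteq> j"
    hence "i < j \<or> j < i" by arith
    thus False using sorted_from_succ[OF assms, of i j] sorted_from_succ[OF assms, of j i] ij by auto
  qed
qed

lemma step_roots:
  fixes p :: "real poly" and xs :: "nat \<Rightarrow> real" and M :: nat
  assumes deg: "degree p = Suc M" and lead: "lead_coeff p > 0"
    and srt: "\<forall>i. Suc i < M \<longrightarrow> xs i < xs (Suc i)"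
    and sgn: "\<forall>i<M. (-1) ^ (M - i) * poly p (xs i) > 0"
  shows "\<exists>zs. (\<forall>i<M. zs i < xs i \<and> xs i < zs (Suc i))
            \<and> (\<forall>i. Suc i < Suc M \<longrightarrow> zs i < zs (Suc i))
            \<and> p = smult (lead_coeff p) (\<Prod>i<Suc M. [:- zs i, 1:])"
proof -
  obtain B where B: "\<And>x. x \<ge> B \<Longrightarrow> poly p x > 0"
      "\<And>x. x \<le> - B \<Longrightarrow> (-1) ^ Suc M * poly p x > 0"
    using poly_infty_signs[OF lead] deg by metis
  define R where "R = \<bar>B\<bar> + 1 + (\<Sum>i<M. \<bar>xs i\<bar>)"
  have xsR: "- R < xs i \<and> xs i < R" if "i < M" for i
  proof -
    have "\<bar>xs i\<bar> \<le> (\<Sum>i<M. \<bar>xs i\<bar>)"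
      by (rule member_le_sum) (use that in auto)
    thus ?thesis unfolding R_def by linarith
  qed
  have "0 \<le> (\<Sum>i<M. \<bar>xs i\<bar>)" by (rule sum_nonneg) auto
  hence RB: "R \<ge> B" "- R \<le> - B" unfolding R_def by linarith+
  define pt where "pt j = (if j = 0 then - R else if j \<le> M then xs (j - 1) else R)" for j
  have ptsgn: "(-1) ^ (Suc M - j) * poly p (pt j) > 0" if jM: "j \<le> Suc M" for j
  proof -
    consider "j = 0" | "1 \<le> j \<and> j \<le> M" | "j = Suc M" using jM by (cases "j = 0"; cases "j = Suc M") auto
    thus ?thesis
    proof cases
      case 1 thus ?thesis using B(2)[of "- R"] RB by (simp add: pt_def)
    next
      case 2
      hence e: "Suc M - j = M - (j - 1)" and l: "j - 1 < M" by auto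
      have "(-1) ^ (M - (j - 1)) * poly p (xs (j - 1)) > 0" using sgn l by blast
      thus ?thesis using 2 by (simp only: e pt_def) simp
    next
      case 3 thus ?thesis using B(1)[of R] RB by (simp add: pt_def)
    qed
  qed
  have ptinc: "pt j < pt (Suc j)" if jM: "j \<le> M" for j
  proof -
    consider "j = 0" "M = 0" | "j = 0" "M > 0" | "1 \<le> j" "j < M" | "1 \<le> j" "j = M" using jM by (cases "j = 0"; cases "j = M"; cases "M = 0") auto
    thus ?thesis
    proof cases
      case 1 thus ?thesis unfolding pt_def R_def by simp
    next
      case 2 thus ?thesis unfolding pt_def using xsR[of 0] by simp
    next
      case 3
      hence "Suc (j - 1) < M" by simp
      hence "xs (j - 1) < xs (Suc (j - 1))" using srt by blast
      thus ?thesis using 3 unfolding pt_def by simp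
    next
      case 4 thus ?thesis unfolding pt_def using xsR[of "j - 1"] by simp
    qed
  qed
  have "\<exists>z. j \<le> M \<longrightarrow> pt j < z \<and> z < pt (Suc j) \<and> poly p z = 0" for j
  proof (cases "j \<le> M")
    case True
    define s where "s = ((-1::real) ^ (M - j))"
    have s2: "s * s = 1" unfolding s_def by (simp flip: power2_eq_square power_mult add: power_mult_distrib)
    have a: "(- s) * poly p (pt j) > 0" using ptsgn[of j] True
      by (simp add: s_def Suc_diff_le)
    have b: "s * poly p (pt (Suc j)) > 0" using ptsgn[of "Suc j"] True by (simp add: s_def)
    have "((- s) * poly p (pt j)) * (s * poly p (pt (Suc j))) > 0" using a b by (rule mult_pos_pos)
    hence "- (s * s) * (poly p (pt j) * poly p (pt (Suc j))) > 0" by (simp add: algebra_simps)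
    hence "poly p (pt j) * poly p (pt (Suc j)) < 0" using s2 by simp
    then obtain z where "z > pt j" "z < pt (Suc j)" "poly p z = 0" using poly_IVT ptinc[OF True] by blast
    thus ?thesis by blast
  qed simp
  then obtain zs where zs: "\<And>j. j \<le> M \<Longrightarrow> pt j < zs j \<and> zs j < pt (Suc j) \<and> poly p (zs j) = 0"
    by metis
  have inter: "\<forall>i<M. zs i < xs i \<and> xs i < zs (Suc i)"
  proof (intro allI impI)
    fix i assume "i < M"
    hence "pt (Suc i) = xs i" by (simp add: pt_def)
    thus "zs i < xs i \<and> xs i < zs (Suc i)" using zs[of i] zs[of "Suc i"] \<open>i < M\<close> by auto
  qed
  have inc: "\<forall>i. Suc i < Suc M \<longrightarrow> zs i < zs (Suc i)"
    using inter by auto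
  have "p = smult (lead_coeff p) (\<Prod>i<Suc M. [:- zs i, 1:])"
  proof (rule prod_roots)
    show "degree p = Suc M" by (rule deg)
    show "p \<noteq> 0" using lead by auto
    show "inj_on zs {..<Suc M}" by (rule sorted_inj[OF inc])
    show "\<forall>i<Suc M. poly p (zs i) = 0" using zs by auto
  qed
  thus ?thesis using inter inc by blast
qed

lemma mh_rec: "poly (monic_hermite (Suc (Suc k))) x
   = x * poly (monic_hermite (Suc k)) x - (real k + 1) / 2 * poly (monic_hermite k) x"
  by simp

lemma mh_coeff: "(\<forall>i>k. coeff (monic_hermite k) i = 0) \<and> coeff (monic_hermite k) k = 1"
proof (induction k rule: monic_hermite.induct)
  case 1 then show ?case by simp
next
  case 2 then show ?case by (auto simp: coeff_pCons split: nat.splits)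
next
  case (3 n)
  have e: "[:0, 1:] * monic_hermite (Suc n) = pCons 0 (monic_hermite (Suc n))"
    by (simp add: mult_pCons_left)
  show ?case
  proof (intro conjI allI impI)
    fix i assume "i > Suc (Suc n)"
    thus "coeff (monic_hermite (Suc (Suc n))) i = 0" using 3
      by (auto simp: e coeff_pCons split: nat.splits)
  next
    show "coeff (monic_hermite (Suc (Suc n))) (Suc (Suc n)) = 1" using 3
      by (auto simp: e coeff_pCons)
  qed
qed

lemma mh_degree: "degree (monic_hermite k) = k"
  using mh_coeff[of k] by (metis degree_le le_degree le_antisym one_neq_zero le_less)

lemma mh_lead: "lead_coeff (monic_hermite k) = 1"
  using mh_coeff[of k] mh_degree[of k] by simp

lemma mh_parity: "poly (monic_hermite k) (- x) = (-1) ^ k * poly (monic_hermite k) x"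
  by (induction k rule: monic_hermite.induct) (auto simp: algebra_simps)

lemma mh_pos_aux:
  fixes x :: real
  assumes "x > 0" "x^2 \<ge> 2 * (real m - 1)"
  shows "Suc k \<le> m \<Longrightarrow> poly (monic_hermite k) x > 0 \<and>
           poly (monic_hermite (Suc k)) x \<ge> x / 2 * poly (monic_hermite k) x"
proof (induction k)
  case 0 then show ?case using assms by simp
next
  case (Suc k)
  let ?a = "poly (monic_hermite k) x" and ?b = "poly (monic_hermite (Suc k)) x"
  have a: "?a > 0" and ab: "?b \<ge> x / 2 * ?a" using Suc by auto
  have b: "?b > 0" using a ab assms(1) by (smt (verit) mult_pos_pos half_gt_zero)
  have km: "2 * (real k + 1) \<le> x^2" using Suc.prems assms(2) by simp
  have "(real k + 1) * ?a \<le> x^2 / 2 * ?a" using km a by (intro mult_right_mono) auto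
  also have "x^2 / 2 * ?a = x * (x / 2 * ?a)" by (simp add: power2_eq_square)
  also have "x * (x / 2 * ?a) \<le> x * ?b" using ab assms(1) by (simp add: mult_left_mono)
  finally have "(real k + 1) * ?a \<le> x * ?b" .
  hence "poly (monic_hermite (Suc (Suc k))) x \<ge> x / 2 * ?b"
    by (simp add: field_simps)
  thus ?case using b by simp
qed

lemma mh_pos:
  fixes x :: real
  assumes "x > 0" "x^2 \<ge> 2 * (real m - 1)" "m \<ge> 1"
  shows "poly (monic_hermite m) x > 0"
proof -
  obtain k where k: "m = Suc k" using assms(3) by (cases m) auto
  have "poly (monic_hermite k) x > 0 \<and> poly (monic_hermite (Suc k)) x \<ge> x / 2 * poly (monic_hermite k) x"
    using mh_pos_aux[OF assms(1,2), of k] k by simp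
  thus ?thesis using k assms(1) by (smt (verit) mult_pos_pos half_gt_zero)
qed

lemma mh_zero_bound:
  fixes y :: real
  assumes "poly (monic_hermite m) y = 0"
  shows "y^2 \<le> 2 * real m"
proof (rule ccontr)
  assume A: "\<not> y^2 \<le> 2 * real m"
  have m1: "m \<ge> 1" using assms by (cases m) auto
  show False
  proof (cases "y > 0")
    case True
    thus False using mh_pos[OF True _ m1] A assms by simp
  next
    case False
    hence "y < 0" using A by (cases "y = 0") auto
    hence "- y > 0" by simp
    moreover have "(- y)^2 \<ge> 2 * (real m - 1)" using A by simp
    ultimately have "poly (monic_hermite m) (- y) > 0" using mh_pos m1 by blast
    thus False using assms by (simp add: mh_parity)
  qed
qed

definition sorted_on :: "nat \<Rightarrow> (nat \<Rightarrow> real) \<Rightarrow> bool" where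
  "sorted_on N f \<longleftrightarrow> (\<forall>i. Suc i < N \<longrightarrow> f i < f (Suc i))"

lemma interlace_sign:
  fixes xs ws :: "nat \<Rightarrow> real" and m i :: nat
  assumes sx: "sorted_on (Suc m) xs" and sw: "sorted_on m ws"
    and il: "\<forall>i<m. xs i < ws i \<and> ws i < xs (Suc i)" and im: "i \<le> m"
  shows "(-1) ^ (m - i) * (\<Prod>k<m. (xs i - ws k)) > 0"
proof -
  have ne: "\<forall>k<m. xs i \<noteq> ws k"
  proof (intro allI impI)
    fix k assume k: "k < m"
    show "xs i \<noteq> ws k"
    proof (cases "i \<le> k")
      case True
      have "ws i \<le> ws k" using sorted_from_succ[OF sw[unfolded sorted_on_def], of i k] True k
        by (cases "i = k") auto
      moreover have "xs i < ws i" using il True k by auto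
      ultimately show ?thesis by linarith
    next
      case False
      have "xs (Suc k) \<le> xs i" using sorted_from_succ[OF sx[unfolded sorted_on_def], of "Suc k" i] False im
        by (cases "Suc k = i") auto
      moreover have "ws k < xs (Suc k)" using il k by auto
      ultimately show ?thesis by linarith
    qed
  qed
  have "{k. k < m \<and> xs i < ws k} = {i..<m}"
  proof (intro set_eqI iffI)
    fix k assume "k \<in> {k. k < m \<and> xs i < ws k}"
    hence k: "k < m" "xs i < ws k" by auto
    have "i \<le> k"
    proof (rule ccontr)
      assume "\<not> i \<le> k"
      hence "xs (Suc k) \<le> xs i" using sorted_from_succ[OF sx[unfolded sorted_on_def], of "Suc k" i] im
        by (cases "Suc k = i") auto
      moreover have "ws k < xs (Suc k)" using il k by auto
      ultimately show False using k by linarith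
    qed
    thus "k \<in> {i..<m}" using k by auto
  next
    fix k assume "k \<in> {i..<m}"
    hence k: "i \<le> k" "k < m" by auto
    have "ws i \<le> ws k" using sorted_from_succ[OF sw[unfolded sorted_on_def], of i k] k
      by (cases "i = k") auto
    moreover have "xs i < ws i" using il k by auto
    ultimately show "k \<in> {k. k < m \<and> xs i < ws k}" using k by simp
  qed
  hence "card {k. k < m \<and> xs i < ws k} = m - i" by simp
  thus ?thesis using sign_prod[OF ne] by simp
qed

lemma hermite_struct:
  "\<exists>xs ws. sorted_on (Suc m) xs \<and> monic_hermite (Suc m) = (\<Prod>i<Suc m. [:- xs i, 1:])
     \<and> sorted_on m ws \<and> monic_hermite m = (\<Prod>i<m. [:- ws i, 1:])
     \<and> (\<forall>i<m. xs i < ws i \<and> ws i < xs (Suc i))"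
proof (induction m)
  case 0
  show ?case by (rule exI[of _ "\<lambda>_. 0"], rule exI[of _ "\<lambda>_. 0"]) (simp add: sorted_on_def)
next
  case (Suc m)
  then obtain xs ws where sx: "sorted_on (Suc m) xs" and hx: "monic_hermite (Suc m) = (\<Prod>i<Suc m. [:- xs i, 1:])"
    and sw: "sorted_on m ws" and hw: "monic_hermite m = (\<Prod>i<m. [:- ws i, 1:])"
    and il: "\<forall>i<m. xs i < ws i \<and> ws i < xs (Suc i)" by blast
  have sgn: "\<forall>i<Suc m. (-1) ^ (Suc m - i) * poly (monic_hermite (Suc (Suc m))) (xs i) > 0"
  proof (intro allI impI)
    fix i assume i: "i < Suc m"
    have "(\<Prod>k<Suc m. xs i - xs k) = 0" using i by (intro prod_zero) auto
    hence z: "poly (monic_hermite (Suc m)) (xs i) = 0" by (simp only: hx poly_prod) simp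
    have pos: "(-1) ^ (m - i) * (\<Prod>k<m. (xs i - ws k)) > 0"
      using interlace_sign[OF sx sw il] i by simp
    have "poly (monic_hermite m) (xs i) = (\<Prod>k<m. (xs i - ws k))" by (simp add: hw poly_prod)
    hence eq: "(-1) ^ (Suc m - i) * poly (monic_hermite (Suc (Suc m))) (xs i)
       = (real m + 1) / 2 * ((-1) ^ (m - i) * (\<Prod>k<m. (xs i - ws k)))"
      using i by (simp add: mh_rec z Suc_diff_le)
    show "(-1) ^ (Suc m - i) * poly (monic_hermite (Suc (Suc m))) (xs i) > 0"
      unfolding eq using pos by simp
  qed
  have deg: "degree (monic_hermite (Suc (Suc m))) = Suc (Suc m)" by (rule mh_degree)
  have lead: "lead_coeff (monic_hermite (Suc (Suc m))) > 0" by (simp only: mh_lead)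
  have srt: "\<forall>i. Suc i < Suc m \<longrightarrow> xs i < xs (Suc i)" using sx by (simp add: sorted_on_def)
  obtain zs where zs: "\<forall>i<Suc m. zs i < xs i \<and> xs i < zs (Suc i)"
     "\<forall>i. Suc i < Suc (Suc m) \<longrightarrow> zs i < zs (Suc i)"
     "monic_hermite (Suc (Suc m)) = smult (lead_coeff (monic_hermite (Suc (Suc m)))) (\<Prod>i<Suc (Suc m). [:- zs i, 1:])"
    using step_roots[OF deg lead srt sgn] by blast
  have zs3: "monic_hermite (Suc (Suc m)) = (\<Prod>i<Suc (Suc m). [:- zs i, 1:])"
    using zs(3) by (simp only: mh_lead smult_1_left)
  show ?case
    apply (rule exI[of _ zs], rule exI[of _ xs])
    using zs(1,2) zs3 sx hx unfolding sorted_on_def by blast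
qed

lemma rho_bound:
  fixes \<rho> :: "nat \<Rightarrow> real" and \<nu> :: real and n :: nat
  assumes rho_pos: "\<And>m. \<rho> m > 0" and nu: "0 \<le> \<nu>"
    and rho_ratio: "\<And>m. m \<ge> 1 \<Longrightarrow> 2 * \<rho> (m - 1) / \<rho> m \<le> real m powr \<nu>"
  shows "j \<le> n \<Longrightarrow> \<rho> (n - j) \<le> \<rho> n * (real n powr \<nu> / 2) ^ j"
proof (induction j)
  case 0 then show ?case by simp
next
  case (Suc j)
  define m where "m = n - j"
  have m1: "m \<ge> 1" and mn: "m \<le> n" using Suc.prems by (auto simp: m_def)
  have e: "n - Suc j = m - 1" by (simp add: m_def)
  have "2 * \<rho> (m - 1) / \<rho> m \<le> real m powr \<nu>" using rho_ratio[OF m1] .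
  hence r1: "\<rho> (m - 1) \<le> \<rho> m * (real m powr \<nu> / 2)" using rho_pos[of m] by (simp add: field_simps)
  have w: "real m powr \<nu> \<le> real n powr \<nu>" using mn nu by (intro powr_mono2) auto
  have IH: "\<rho> m \<le> \<rho> n * (real n powr \<nu> / 2) ^ j" using Suc by (simp add: m_def)
  have "\<rho> (n - Suc j) \<le> \<rho> m * (real m powr \<nu> / 2)" using r1 e by simp
  also have "\<dots> \<le> \<rho> m * (real n powr \<nu> / 2)" using rho_pos[of m] w by simp
  also have "\<dots> \<le> \<rho> n * (real n powr \<nu> / 2) ^ j * (real n powr \<nu> / 2)"
    using IH by (intro mult_right_mono) auto
  also have "\<dots> = \<rho> n * (real n powr \<nu> / 2) ^ Suc j" by simp
  finally show ?case .
qed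

lemma herm_back_bound:
  fixes y :: real and n K :: nat
  assumes z: "poly (monic_hermite (n - 1)) y = 0" and nK: "n \<ge> 2 * K" and K2: "K \<ge> 2"
  defines "h \<equiv> \<lambda>k. poly (monic_hermite (n - 1 - k)) y"
  defines "c \<equiv> 8 / sqrt (real n)"
  shows "Suc d \<le> K - 1 \<Longrightarrow> \<bar>h (Suc d)\<bar> \<le> c ^ d * \<bar>h 1\<bar> \<and> c * \<bar>h d\<bar> \<le> c ^ d * \<bar>h 1\<bar>"
proof (induction d)
  case 0
  have "h 0 = 0" using z by (simp add: h_def)
  then show ?case by simp
next
  case (Suc d)
  define s where "s = sqrt (real n)"
  have n4: "real n \<ge> 4" using nK K2 by simp
  have s0: "s > 0" using n4 by (simp add: s_def)
  have ss: "s * s = real n" using n4 by (simp add: s_def)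
  have c: "c = 8 / s" by (simp add: c_def s_def)
  have c0: "c > 0" using s0 c by simp
  define C where "C = c ^ d * \<bar>h 1\<bar>"
  have C0: "C \<ge> 0" using c0 by (simp add: C_def)
  have IH: "\<bar>h (Suc d)\<bar> \<le> C" "c * \<bar>h d\<bar> \<le> C" using Suc by (auto simp: C_def)
  have y2: "y^2 \<le> 2 * real n" using mh_zero_bound[OF z] n4 by simp
  have ya: "\<bar>y\<bar> \<le> 3 / 2 * s"
  proof -
    have "y^2 \<le> (3 / 2 * s)^2" using y2 ss by (simp add: power2_eq_square)
    hence hh: "\<bar>y\<bar>^2 \<le> (3 / 2 * s)^2" by simp
    show ?thesis by (rule power2_le_imp_le[OF hh]) (use s0 in simp)
  qed
  define k where "k = n - 3 - d"
  have dk: "d + 2 \<le> K - 1" using Suc.prems by simp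
  have idx: "n - 1 - d = Suc (Suc k)" "n - 1 - Suc d = Suc k" "n - 1 - Suc (Suc d) = k"
    using dk nK by (auto simp: k_def)
  have "k + 3 + d = n" using dk nK by (simp add: k_def)
  hence "real k + 3 + real d = real n" by (metis of_nat_add numeral_3_eq_3 of_nat_numeral)
  moreover have "real d \<le> real K - 3" using dk K2 by linarith
  moreover have "real n \<ge> 2 * real K" using nK by linarith
  ultimately have kn: "2 * real k + 2 \<ge> real n" by linarith
  have rec: "(real k + 1) / 2 * h (Suc (Suc d)) = y * h (Suc d) - h d"
    using mh_rec[of k y] idx by (simp add: h_def)
  have "(real k + 1) / 2 * \<bar>h (Suc (Suc d))\<bar> \<le> \<bar>y\<bar> * \<bar>h (Suc d)\<bar> + \<bar>h d\<bar>"
  proof -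
    have "\<bar>(real k + 1) / 2 * h (Suc (Suc d))\<bar> \<le> \<bar>y * h (Suc d)\<bar> + \<bar>h d\<bar>"
      unfolding rec by (rule abs_triangle_ineq4)
    thus ?thesis by (simp add: abs_mult)
  qed
  hence "c * ((real k + 1) / 2 * \<bar>h (Suc (Suc d))\<bar>) \<le> c * (\<bar>y\<bar> * \<bar>h (Suc d)\<bar>) + c * \<bar>h d\<bar>"
    using c0 by (simp add: distrib_left[symmetric] mult_left_mono)
  also have "c * (\<bar>y\<bar> * \<bar>h (Suc d)\<bar>) \<le> c * (3 / 2 * s * C)"
    using c0 ya IH(1) by (intro mult_left_mono mult_mono) auto
  also have "c * (3 / 2 * s * C) = 12 * C" using s0 by (simp add: c)
  finally have A: "c * ((real k + 1) / 2 * \<bar>h (Suc (Suc d))\<bar>) \<le> 13 * C" using IH(2) by simp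
  have "2 * s * \<bar>h (Suc (Suc d))\<bar> \<le> c * ((real k + 1) / 2 * \<bar>h (Suc (Suc d))\<bar>)"
  proof -
    have e1: "c * ((real k + 1) / 2) = 4 * (real k + 1) / s" using s0 by (simp add: c field_simps)
    have "2 * s * s = 2 * real n" using ss by (simp add: mult.assoc)
    hence "2 * s * s \<le> 4 * real k + 4" using kn by linarith
    hence "2 * s * s \<le> 4 * (real k + 1)" by (simp add: algebra_simps)
    hence "2 * s \<le> 4 * (real k + 1) / s" using s0 by (simp add: le_divide_eq)
    hence "2 * s \<le> c * ((real k + 1) / 2)" unfolding e1 .
    thus ?thesis by (metis mult.assoc mult_right_mono abs_ge_zero)
  qed
  with A have "2 * s * \<bar>h (Suc (Suc d))\<bar> \<le> 13 * C" by linarith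
  hence "\<bar>h (Suc (Suc d))\<bar> \<le> 13 * C / (2 * s)" using s0 by (simp add: field_simps)
  also have "13 * C / (2 * s) \<le> c * C"
  proof -
    have "13 * C / (2 * s) = (13 / 2) * (C / s)" by simp
    also have "\<dots> \<le> 8 * (C / s)" using C0 s0 by (intro mult_right_mono) auto
    also have "8 * (C / s) = c * C" by (simp add: c)
    finally show ?thesis .
  qed
  finally have B1: "\<bar>h (Suc (Suc d))\<bar> \<le> c ^ Suc d * \<bar>h 1\<bar>" by (simp add: C_def mult.assoc)
  have B2: "c * \<bar>h (Suc d)\<bar> \<le> c ^ Suc d * \<bar>h 1\<bar>"
    using IH(1) c0 by (simp add: C_def mult_left_mono mult.assoc)
  show ?case using B1 B2 by simp
qed

lemma gq_sum:
  assumes "0 \<le> \<nu>" "K \<ge> 1"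
  shows "geom_quot \<nu> K = (\<Sum>i<K - 1. (6 powr \<nu>) ^ i)"
proof (cases "\<nu> = 0")
  case True
  thus ?thesis using assms by (simp add: geom_quot_def of_nat_diff)
next
  case False
  define e where "e = 6 powr \<nu>"
  have e1: "e > 1" using assms False unfolding e_def by (intro gr_one_powr) auto
  have "6 powr (\<nu> * (real K - 1)) = e ^ (K - 1)"
  proof -
    have "6 powr (\<nu> * (real K - 1)) = (6 powr \<nu>) powr real (K - 1)"
      using assms by (simp add: powr_powr of_nat_diff)
    also have "\<dots> = e ^ (K - 1)" unfolding e_def by (rule powr_realpow) simp
    finally show ?thesis .
  qed
  hence "geom_quot \<nu> K = (e ^ (K - 1) - 1) / (e - 1)" using False by (simp add: geom_quot_def e_def)
  also have "\<dots> = (1 - e ^ (K - 1)) / (1 - e)" by (metis minus_diff_eq minus_divide_divide)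
  also have "\<dots> = (\<Sum>i<K - 1. e ^ i)" using e1 by (simp add: sum_gp_strict)
  finally show ?thesis by (simp add: e_def)
qed

lemma gq_nonneg: "0 \<le> \<nu> \<Longrightarrow> K \<ge> 1 \<Longrightarrow> geom_quot \<nu> K \<ge> 0"
  by (simp add: gq_sum sum_nonneg)

lemma bound_sqrt:
  fixes M :: real
  assumes "0 \<le> \<nu>" "K \<ge> 2" "M \<ge> 0"
    and nb: "real n \<ge> 6 powr (2 * \<nu>) * (geom_quot \<nu> K)\<^sup>2 * 4 powr (real K - 2) * M\<^sup>2"
  shows "6 powr \<nu> * geom_quot \<nu> K * 2 ^ (K - 2) * M \<le> sqrt (real n)"
proof -
  have a: "6 powr (2 * \<nu>) = (6 powr \<nu>)^2" by (simp add: power2_eq_square flip: powr_add)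
  have "4 powr (real K - 2) = 4 powr (real (K - 2))" using assms by (simp add: of_nat_diff)
  also have "\<dots> = 4 ^ (K - 2)" by (rule powr_realpow) simp
  also have "(4::real) ^ (K - 2) = (2 ^ (K - 2))^2"
    by (simp add: power2_eq_square flip: power_mult_distrib)
  finally have b: "4 powr (real K - 2) = (2 ^ (K - 2))^2" .
  have "(6 powr \<nu> * geom_quot \<nu> K * 2 ^ (K - 2) * M)^2 \<le> real n"
    using nb by (simp add: a b power_mult_distrib)
  thus ?thesis by (rule real_le_rsqrt)
qed

lemma w_le_es:
  fixes n :: nat
  assumes nu: "0 \<le> \<nu>" "\<nu> \<le> 1/4" and n4: "n \<ge> 4"
  shows "2 * real n powr \<nu> \<le> 6 powr \<nu> * sqrt (real n)"
proof (cases "n \<le> 6")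
  case True
  have a: "real n powr \<nu> \<le> 6 powr \<nu>" using True nu by (intro powr_mono2) auto
  have b: "2 \<le> sqrt (real n)"
  proof -
    have "sqrt 4 \<le> sqrt (real n)" using n4 by (subst real_sqrt_le_iff) simp
    thus ?thesis by simp
  qed
  have c: "6 powr \<nu> > 0" by simp
  have "2 * real n powr \<nu> \<le> 2 * 6 powr \<nu>" using a by simp
  also have "\<dots> \<le> sqrt (real n) * 6 powr \<nu>" using b c by (intro mult_right_mono) auto
  finally show ?thesis by (simp add: mult.commute)
next
  case False
  define t where "t = (real n / 6) powr (1/4)"
  have t0: "t > 0" using n4 by (simp add: t_def)
  have w: "real n powr \<nu> = (real n / 6) powr \<nu> * 6 powr \<nu>"
    by (subst powr_mult[symmetric]) simp
  have wt: "(real n / 6) powr \<nu> \<le> t" unfolding t_def using nu False by (intro powr_mono) auto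
  have ts: "2 * t \<le> sqrt (real n)"
  proof -
    have "t ^ 4 = t powr 4" using t0 by (simp add: powr_numeral)
    also have "\<dots> = real n / 6" unfolding t_def by (simp add: powr_powr)
    finally have t4: "t ^ 4 = real n / 6" .
    have n3: "real n \<ge> 3" using False by simp
    have "(2 * t) ^ 4 = 16 * t ^ 4" by (simp add: power_mult_distrib)
    also have "\<dots> = 16 * (real n / 6)" by (simp add: t4)
    also have "\<dots> \<le> 3 * real n" by simp
    also have "\<dots> \<le> real n * real n" using n3 by (intro mult_right_mono) auto
    also have "real n * real n = (sqrt (real n) ^ 2) ^ 2" by (simp add: power2_eq_square)
    also have "\<dots> = sqrt (real n) ^ Suc 3" by (simp only: power_mult[symmetric]) simp
    finally have "(2 * t) ^ Suc 3 \<le> sqrt (real n) ^ Suc 3" by (simp add: numeral_eq_Suc)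
    thus ?thesis by (rule power_le_imp_le_base) simp
  qed
  have "2 * real n powr \<nu> = 2 * (real n / 6) powr \<nu> * 6 powr \<nu>" using w by simp
  also have "\<dots> \<le> 2 * t * 6 powr \<nu>" using wt by (intro mult_right_mono) auto
  also have "\<dots> \<le> sqrt (real n) * 6 powr \<nu>" using ts by (intro mult_right_mono) auto
  finally show ?thesis by (simp add: mult.commute)
qed

lemma w2_le_s:
  fixes n :: nat
  assumes nu: "0 \<le> \<nu>" "\<nu> \<le> 1/4" and n1: "n \<ge> 1"
  shows "(real n powr \<nu>)^2 \<le> sqrt (real n)"
proof -
  have "(real n powr \<nu>)^2 = real n powr (2 * \<nu>)" by (simp add: power2_eq_square flip: powr_add)
  also have "\<dots> \<le> real n powr (1/2)" using nu n1 by (intro powr_mono) auto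
  also have "\<dots> = sqrt (real n)" by (simp add: powr_half_sqrt)
  finally show ?thesis .
qed

lemma sum_shift2:
  fixes f :: "nat \<Rightarrow> real"
  assumes "K \<ge> 2"
  shows "(\<Sum>j\<in>{2..K}. f (j - 2)) = (\<Sum>i<K - 1. f i)"
proof -
  have "{2..K} = (\<lambda>i. i + 2) ` {..<K - 1}"
  proof (intro set_eqI iffI)
    fix j assume "j \<in> {2..K}" thus "j \<in> (\<lambda>i. i + 2) ` {..<K - 1}"
      by (intro image_eqI[of _ _ "j - 2"]) auto
  qed (use assms in auto)
  moreover have "inj_on (\<lambda>i. i + 2) {..<K - 1}" by (auto simp: inj_on_def)
  ultimately show ?thesis by (simp add: sum.reindex)
qed

lemma E_bound:
  fixes \<rho> \<gamma> :: "nat \<Rightarrow> real" and \<nu> y :: real and K n :: nat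
  assumes rho_pos: "\<And>m. \<rho> m > 0" and nu: "0 \<le> \<nu>" "\<nu> \<le> 1/4"
    and rho_ratio: "\<And>m. m \<ge> 1 \<Longrightarrow> 2 * \<rho> (m - 1) / \<rho> m \<le> real m powr \<nu>"
    and K2: "K \<ge> 2"
    and n_bound1: "real n \<ge> 6 powr (2 * \<nu>) * (geom_quot \<nu> K)\<^sup>2 * 4 powr (real K - 2)
                     * (Max {\<bar>\<gamma> j\<bar> | j. 2 \<le> j \<and> j \<le> K})\<^sup>2"
    and nK: "n \<ge> 2 * K"
    and z: "poly (monic_hermite (n - 1)) y = 0"
  shows "\<bar>\<Sum>j\<in>{2..K}. \<gamma> j * \<rho> (n - j) * poly (monic_hermite (n - j)) y\<bar>
          \<le> \<rho> n * (real n / 4) * \<bar>poly (monic_hermite (n - 2)) y\<bar>"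
proof -
  define M where "M = Max {\<bar>\<gamma> j\<bar> | j. 2 \<le> j \<and> j \<le> K}"
  have Mset: "{\<bar>\<gamma> j\<bar> | j. 2 \<le> j \<and> j \<le> K} = (\<lambda>j. \<bar>\<gamma> j\<bar>) ` {2..K}" by auto
  have Mge: "\<bar>\<gamma> j\<bar> \<le> M" if "j \<in> {2..K}" for j
    unfolding M_def Mset using that by (intro Max_ge) auto
  have M0: "M \<ge> 0" using Mge[of 2] K2 by force
  define s where "s = sqrt (real n)"
  define w where "w = real n powr \<nu>"
  define e where "e = 6 powr \<nu>"
  define c where "c = 8 / s"
  define A where "A = \<bar>poly (monic_hermite (n - 2)) y\<bar>"
  define G where "G = geom_quot \<nu> K"
  have n4: "n \<ge> 4" using nK K2 by simp
  have s0: "s > 0" using n4 by (simp add: s_def)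
  have ss: "s * s = real n" using n4 by (simp add: s_def)
  have w0: "w > 0" using n4 by (simp add: w_def)
  have e1: "e \<ge> 1" using powr_mono[of 0 \<nu> 6] nu by (simp add: e_def)
  have c0: "c > 0" using s0 by (simp add: c_def)
  have A0: "A \<ge> 0" by (simp add: A_def)
  have G0: "G \<ge> 0" using nu K2 by (simp add: G_def gq_nonneg)
  have hb: "\<bar>poly (monic_hermite (n - j)) y\<bar> \<le> c ^ (j - 2) * A" if j: "j \<in> {2..K}" for j
  proof -
    have "Suc (j - 2) \<le> K - 1" using j by auto
    from herm_back_bound[OF z nK K2 this]
    have "\<bar>poly (monic_hermite (n - 1 - Suc (j - 2))) y\<bar> \<le> (8 / sqrt (real n)) ^ (j - 2) * \<bar>poly (monic_hermite (n - 1 - 1)) y\<bar>"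
      by blast
    moreover have "n - 1 - Suc (j - 2) = n - j" using j nK by auto
    moreover have "n - 1 - 1 = n - 2" by simp
    ultimately show ?thesis by (simp add: c_def s_def A_def)
  qed
  have rb: "\<rho> (n - j) \<le> \<rho> n * (w / 2) ^ j" if j: "j \<in> {2..K}" for j
    using rho_bound[OF rho_pos nu(1) rho_ratio, of j n] j nK unfolding w_def by auto
  have wc: "w * c / 2 \<le> 2 * e"
  proof -
    have "2 * w \<le> e * s" using w_le_es[OF nu n4] by (simp add: w_def e_def s_def)
    hence "4 * w \<le> 2 * e * s" by simp
    hence "4 * w / s \<le> 2 * e" using s0 by (simp add: divide_le_eq)
    moreover have "w * c / 2 = 4 * w / s" by (simp add: c_def)
    ultimately show ?thesis by simp
  qed
  define X where "X = M * \<rho> n * A * (w^2 / 4)"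
  have X0: "X \<ge> 0" using M0 rho_pos[of n] A0 by (simp add: X_def)
  have tb: "\<bar>\<gamma> j * \<rho> (n - j) * poly (monic_hermite (n - j)) y\<bar> \<le> X * 2 ^ (K - 2) * e ^ (j - 2)"
    if j: "j \<in> {2..K}" for j
  proof -
    have "\<bar>\<gamma> j * \<rho> (n - j) * poly (monic_hermite (n - j)) y\<bar>
        = \<bar>\<gamma> j\<bar> * \<rho> (n - j) * \<bar>poly (monic_hermite (n - j)) y\<bar>"
      using rho_pos[of "n - j"] by (simp add: abs_mult)
    also have "\<dots> \<le> M * (\<rho> n * (w / 2) ^ j) * (c ^ (j - 2) * A)"
      using Mge[OF j] rb[OF j] hb[OF j] rho_pos[of "n - j"] M0
      by (intro mult_mono) auto
    also have "\<dots> = X * (w * c / 2) ^ (j - 2)"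
    proof -
      obtain i where i: "j = i + 2" using j by (metis atLeastAtMost_iff le_add_diff_inverse2)
      have "(w / 2) ^ j = (w / 2) ^ 2 * (w / 2) ^ (j - 2)"
        unfolding i by (simp only: power_add add_diff_cancel_right' mult.commute)
      thus ?thesis by (simp add: X_def power_mult_distrib power2_eq_square field_simps)
    qed
    also have "\<dots> \<le> X * (2 * e) ^ (j - 2)"
      using wc w0 c0 X0 by (intro mult_left_mono power_mono) auto
    also have "(2 * e) ^ (j - 2) = 2 ^ (j - 2) * e ^ (j - 2)" by (simp add: power_mult_distrib)
    also have "X * (2 ^ (j - 2) * e ^ (j - 2)) \<le> X * (2 ^ (K - 2) * e ^ (j - 2))"
      using j X0 e1 by (intro mult_left_mono mult_right_mono power_increasing) auto
    finally show ?thesis by (simp add: mult.assoc)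
  qed
  have "\<bar>\<Sum>j\<in>{2..K}. \<gamma> j * \<rho> (n - j) * poly (monic_hermite (n - j)) y\<bar>
      \<le> (\<Sum>j\<in>{2..K}. \<bar>\<gamma> j * \<rho> (n - j) * poly (monic_hermite (n - j)) y\<bar>)"
    by (rule sum_abs)
  also have "\<dots> \<le> (\<Sum>j\<in>{2..K}. X * 2 ^ (K - 2) * e ^ (j - 2))"
    by (rule sum_mono) (rule tb)
  also have "\<dots> = X * 2 ^ (K - 2) * (\<Sum>j\<in>{2..K}. e ^ (j - 2))"
    by (simp add: sum_distrib_left)
  also have "(\<Sum>j\<in>{2..K}. e ^ (j - 2)) = G"
    using sum_shift2[OF K2, of "\<lambda>i. e ^ i"] gq_sum[OF nu(1), of K] K2 by (simp add: G_def e_def)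
  also have "X * 2 ^ (K - 2) * G = \<rho> n * A * (w^2 / 4) * (G * 2 ^ (K - 2) * M)"
    by (simp add: X_def)
  also have "\<dots> \<le> \<rho> n * A * (w^2 / 4) * s"
  proof -
    have "e * G * 2 ^ (K - 2) * M \<le> s"
      using bound_sqrt[OF nu(1) K2 M0 n_bound1[folded M_def]] by (simp add: e_def G_def s_def)
    moreover have "G * 2 ^ (K - 2) * M \<le> e * G * 2 ^ (K - 2) * M"
    proof -
      have P: "0 \<le> G * 2 ^ (K - 2) * M" using G0 M0 by simp
      show ?thesis using mult_right_mono[OF e1 P] by (simp add: mult.assoc)
    qed
    ultimately have "G * 2 ^ (K - 2) * M \<le> s" by linarith
    thus ?thesis using rho_pos[of n] A0 by (intro mult_left_mono) auto
  qed
  also have "\<dots> \<le> \<rho> n * A * (s / 4) * s"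
    using w2_le_s[OF nu, of n] n4 rho_pos[of n] A0 s0
    by (intro mult_right_mono mult_left_mono) (auto simp: w_def s_def)
  also have "\<dots> = \<rho> n * (real n / 4) * A" using ss by (simp add: field_simps)
  finally show ?thesis by (simp add: A_def)
qed

lemma sorted_lt: "sorted_on N f \<Longrightarrow> i < j \<Longrightarrow> j < N \<Longrightarrow> f i < f j"
  unfolding sorted_on_def by (rule sorted_from_succ)

lemma sorted_lt_iff: "sorted_on N f \<Longrightarrow> i < N \<Longrightarrow> j < N \<Longrightarrow> f i < f j \<longleftrightarrow> i < j"
  by (metis sorted_lt less_asym linorder_neqE_nat)

lemma interlaces_from:
  fixes zs xs :: "nat \<Rightarrow> real"
  assumes sz: "sorted_on (Suc M) zs" and sx: "sorted_on M xs"
    and il: "\<forall>i<M. zs i < xs i \<and> xs i < zs (Suc i)" and M1: "M \<ge> 1"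
  shows "interlaces (zs ` {..<Suc M}) (xs ` {..<M})"
proof -
  have minU: "Min (zs ` {..<Suc M}) = zs 0"
  proof (rule Min_eqI)
    fix y assume "y \<in> zs ` {..<Suc M}"
    then obtain i where "i < Suc M" "y = zs i" by auto
    thus "zs 0 \<le> y" using sorted_lt[OF sz, of 0 i] by (cases i) auto
  qed auto
  have minV: "Min (xs ` {..<M}) = xs 0"
  proof (rule Min_eqI)
    fix y assume "y \<in> xs ` {..<M}"
    then obtain i where "i < M" "y = xs i" by auto
    thus "xs 0 \<le> y" using sorted_lt[OF sx, of 0 i] by (cases i) auto
  qed (use M1 in auto)
  have A: "\<exists>v\<in>xs ` {..<M}. a < v \<and> v < b"
    if H: "a \<in> zs ` {..<Suc M}" "b \<in> zs ` {..<Suc M}" "a < b"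
       "\<forall>c\<in>zs ` {..<Suc M}. \<not> (a < c \<and> c < b)" for a b
  proof -
    obtain i j where ij: "i < Suc M" "j < Suc M" "a = zs i" "b = zs j" using H(1,2) by auto
    have "i < j" using sorted_lt_iff[OF sz ij(1,2)] H(3) ij by simp
    have "j = Suc i"
    proof (rule ccontr)
      assume "j \<noteq> Suc i"
      hence "Suc i < j" using \<open>i < j\<close> by simp
      hence "zs i < zs (Suc i)" "zs (Suc i) < zs j" using sorted_lt[OF sz] ij by auto
      thus False using H(4) ij \<open>Suc i < j\<close> by auto
    qed
    hence "i < M" using ij by simp
    thus ?thesis using il ij \<open>j = Suc i\<close> by auto
  qed
  have B: "\<exists>u\<in>zs ` {..<Suc M}. a < u \<and> u < b"
    if H: "a \<in> xs ` {..<M}" "b \<in> xs ` {..<M}" "a < b"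
       "\<forall>c\<in>xs ` {..<M}. \<not> (a < c \<and> c < b)" for a b
  proof -
    obtain i j where ij: "i < M" "j < M" "a = xs i" "b = xs j" using H(1,2) by auto
    have "i < j" using sorted_lt_iff[OF sx ij(1,2)] H(3) ij by simp
    have "j = Suc i"
    proof (rule ccontr)
      assume "j \<noteq> Suc i"
      hence "Suc i < j" using \<open>i < j\<close> by simp
      hence "xs i < xs (Suc i)" "xs (Suc i) < xs j" using sorted_lt[OF sx] ij by auto
      thus False using H(4) ij \<open>Suc i < j\<close> by auto
    qed
    hence "xs i < zs (Suc i)" "zs (Suc i) < xs (Suc i)" using il ij by auto
    moreover have "Suc i < Suc M" using ij by simp
    ultimately show ?thesis using ij \<open>j = Suc i\<close> by auto
  qed
  have c6: "\<forall>a\<in>zs ` {..<Suc M}. \<forall>b\<in>zs ` {..<Suc M}. a < b \<and> (\<forall>c\<in>zs ` {..<Suc M}. \<not> (a < c \<and> c < b)) \<longrightarrow> (\<exists>v\<in>xs ` {..<M}. a < v \<and> v < b)"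
    using A by blast
  have c7: "\<forall>a\<in>xs ` {..<M}. \<forall>b\<in>xs ` {..<M}. a < b \<and> (\<forall>c\<in>xs ` {..<M}. \<not> (a < c \<and> c < b)) \<longrightarrow> (\<exists>u\<in>zs ` {..<Suc M}. a < u \<and> u < b)"
    using B by blast
  have c5: "zs 0 < xs 0" using il M1 by auto
  have ne: "xs ` {..<M} \<noteq> {}" using M1 by (auto simp: lessThan_empty_iff)
  show ?thesis unfolding interlaces_def minU minV
    using c5 c6 c7 ne by (simp add: lessThan_empty_iff)
qed

lemma sum_split01:
  fixes f :: "nat \<Rightarrow> 'a::comm_monoid_add"
  assumes "K \<ge> 1"
  shows "(\<Sum>j\<le>K. f j) = f 0 + f 1 + (\<Sum>j\<in>{2..K}. f j)"
proof -
  have "{..K} = insert 0 (insert 1 {2..K})" using assms by auto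
  thus ?thesis by (simp add: add.assoc)
qed

lemma poly_cor: "poly (map_poly complex_of_real p) (complex_of_real x) = complex_of_real (poly p x)"
  by (induction p) (auto simp: map_poly_pCons)

theorem mainTheorem6:
  fixes \<rho> :: "nat \<Rightarrow> real" and \<gamma> :: "nat \<Rightarrow> real" and \<nu> :: real and K n :: nat
  assumes rho_pos: "\<And>m. \<rho> m > 0"
    and nu: "0 \<le> \<nu>" "\<nu> \<le> 1/4"
    and rho_ratio: "\<And>m. m \<ge> 1 \<Longrightarrow> 2 * \<rho> (m - 1) / \<rho> m \<le> real m powr \<nu>"
    and K: "K > 0"
    and g0: "\<gamma> 0 = 1" and gK: "\<gamma> K \<noteq> 0"
    and n_bound1: "real n \<ge> 6 powr (2 * \<nu>) * (geom_quot \<nu> K)\<^sup>2 * 4 powr (real K - 2)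
                     * (Max {\<bar>\<gamma> j\<bar> | j. 2 \<le> j \<and> j \<le> K})\<^sup>2"
    and n_bound2: "n \<ge> 2 * K"
  shows "(\<forall>z::complex. poly (map_poly complex_of_real (q_poly \<gamma> \<rho> K n)) z = 0 \<longrightarrow> z \<in> \<real>)
       \<and> (\<forall>z::complex. poly (map_poly complex_of_real (q_poly \<gamma> \<rho> K n)) z = 0 \<longrightarrow>
              poly (pderiv (map_poly complex_of_real (q_poly \<gamma> \<rho> K n))) z \<noteq> 0)
       \<and> interlaces {x. poly (q_poly \<gamma> \<rho> K n) x = 0} {x. poly (hermite (n - 1)) x = 0}"
proof -
  have n2: "n \<ge> 2" using K n_bound2 by simp
  define m where "m = n - 2"
  have nm: "n = Suc (Suc m)" using n2 by (simp add: m_def)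
  obtain xs ws where sx: "sorted_on (Suc m) xs" and hx: "monic_hermite (Suc m) = (\<Prod>i<Suc m. [:- xs i, 1:])"
    and sw: "sorted_on m ws" and hw: "monic_hermite m = (\<Prod>i<m. [:- ws i, 1:])"
    and il: "\<forall>i<m. xs i < ws i \<and> ws i < xs (Suc i)"
    using hermite_struct[of m] by blast
  define q where "q = q_poly \<gamma> \<rho> K n"
  have qdef: "q = (\<Sum>j\<le>K. smult (\<gamma> j * \<rho> (n - j)) (monic_hermite (n - j)))"
    by (simp add: q_def q_poly_def)
  have cq: "coeff q i = (\<Sum>j\<le>K. \<gamma> j * \<rho> (n - j) * coeff (monic_hermite (n - j)) i)" for i
    by (simp add: qdef coeff_sum)
  have cq_hi: "coeff q i = 0" if "i > n" for i
  proof -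
    have "coeff (monic_hermite (n - j)) i = 0" for j using mh_coeff[of "n - j"] that by auto
    thus ?thesis by (simp add: cq)
  qed
  have cq_n: "coeff q n = \<rho> n"
  proof -
    obtain K' where K': "K = Suc K'" using K by (cases K) auto
    have "coeff (monic_hermite (n - Suc j)) n = 0" for j using mh_coeff[of "n - Suc j"] n2 by auto
    hence "coeff q n = \<gamma> 0 * \<rho> n * coeff (monic_hermite n) n"
      by (simp only: cq K' sum.atMost_Suc_shift) simp
    thus ?thesis using mh_coeff[of n] g0 by simp
  qed
  have degq: "degree q = Suc (Suc m)"
  proof (rule antisym)
    show "degree q \<le> Suc (Suc m)" using cq_hi nm by (intro degree_le) auto
    show "Suc (Suc m) \<le> degree q" using cq_n rho_pos[of n] nm by (intro le_degree) auto
  qed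
  have leadq: "lead_coeff q = \<rho> n" using degq cq_n nm by simp
  have leadq0: "lead_coeff q > 0" using leadq rho_pos by simp
  have pq: "poly q x = (\<Sum>j\<le>K. \<gamma> j * \<rho> (n - j) * poly (monic_hermite (n - j)) x)" for x
    by (simp add: qdef poly_sum)
  have sgn: "\<forall>i<Suc m. (-1) ^ (Suc m - i) * poly q (xs i) > 0"
  proof (intro allI impI)
    fix i assume i: "i < Suc m"
    define y where "y = xs i"
    have "(\<Prod>k<Suc m. y - xs k) = 0" using i unfolding y_def by (intro prod_zero) auto
    hence z: "poly (monic_hermite (n - 1)) y = 0" using nm by (simp add: hx poly_prod)
    define H where "H = poly (monic_hermite m) y"
    define P where "P = (-1) ^ (m - i) * H"
    have P0: "P > 0"
      using interlace_sign[OF sx sw il, of i] i unfolding P_def H_def y_def by (simp add: hw poly_prod)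
    have absP: "\<bar>H\<bar> = P"
    proof -
      have "\<bar>P\<bar> = \<bar>H\<bar>" unfolding P_def by (simp add: abs_mult)
      thus ?thesis using P0 by simp
    qed
    have Hn: "poly (monic_hermite n) y = - ((real m + 1) / 2) * H"
      using mh_rec[of m y] z nm unfolding H_def by simp
    define E where "E = (\<Sum>j\<in>{2..K}. \<gamma> j * \<rho> (n - j) * poly (monic_hermite (n - j)) y)"
    have qy: "poly q y = \<rho> n * poly (monic_hermite n) y + E"
    proof -
      have "poly q y = \<gamma> 0 * \<rho> (n - 0) * poly (monic_hermite (n - 0)) y
           + \<gamma> 1 * \<rho> (n - 1) * poly (monic_hermite (n - 1)) y + E"
        unfolding pq E_def using K by (subst sum_split01) simp_all
      thus ?thesis using z g0 by simp
    qed
    have Eb: "\<bar>E\<bar> < \<rho> n * ((real m + 1) / 2) * P"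
    proof (cases "K = 1")
      case True
      hence "E = 0" by (simp add: E_def)
      thus ?thesis using P0 rho_pos[of n] by simp
    next
      case False
      hence K2: "K \<ge> 2" using K by simp
      have "\<bar>E\<bar> \<le> \<rho> n * (real n / 4) * \<bar>poly (monic_hermite (n - 2)) y\<bar>"
        unfolding E_def by (rule E_bound[OF rho_pos nu rho_ratio K2 n_bound1 n_bound2 z])
      also have "\<dots> = \<rho> n * (real n / 4) * P" using absP by (simp add: m_def H_def)
      also have "\<dots> < \<rho> n * ((real m + 1) / 2) * P"
      proof -
        have "m \<ge> 2" using K2 n_bound2 nm by simp
        hence "real n / 4 < (real m + 1) / 2" using nm by simp
        thus ?thesis using P0 rho_pos[of n] by (intro mult_strict_right_mono mult_strict_left_mono) auto
      qed
      finally show ?thesis .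
    qed
    have sm: "Suc m - i = Suc (m - i)" using i by simp
    have "(-1) ^ (Suc m - i) * poly q y = \<rho> n * ((real m + 1) / 2) * P + (-1) ^ (Suc m - i) * E"
      unfolding qy Hn P_def sm by (simp add: field_simps)
    moreover have "\<bar>(-1) ^ (Suc m - i) * E\<bar> = \<bar>E\<bar>" by (simp add: abs_mult)
    ultimately show "(-1) ^ (Suc m - i) * poly q (xs i) > 0" using Eb unfolding y_def by linarith
  qed
  have srt: "\<forall>i. Suc i < Suc m \<longrightarrow> xs i < xs (Suc i)" using sx by (simp add: sorted_on_def)
  obtain zs where zil: "\<forall>i<Suc m. zs i < xs i \<and> xs i < zs (Suc i)"
    and zsrt: "\<forall>i. Suc i < Suc (Suc m) \<longrightarrow> zs i < zs (Suc i)"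
    and qprod: "q = smult (lead_coeff q) (\<Prod>i<Suc (Suc m). [:- zs i, 1:])"
    using step_roots[OF degq leadq0 srt sgn] by blast
  have sz: "sorted_on (Suc (Suc m)) zs" using zsrt by (simp add: sorted_on_def)
  have lq: "lead_coeff q \<noteq> 0" using leadq0 by linarith
  have qroots: "poly q x = 0 \<longleftrightarrow> (\<exists>i<Suc (Suc m). x = zs i)" for x
  proof -
    have f1: "poly q x = poly (smult (lead_coeff q) (\<Prod>i<Suc (Suc m). [:- zs i, 1:])) x"
      using qprod by (rule arg_cong[where f="\<lambda>p. poly p x"])
    have f2: "poly (smult (lead_coeff q) (\<Prod>i<Suc (Suc m). [:- zs i, 1:])) x = 0 \<longleftrightarrow> (\<exists>i<Suc (Suc m). x = zs i)"
      by (rule prod_roots_zero_iff[OF lq])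
    show ?thesis by (simp only: f1 f2)
  qed
  define P where "P = map_poly complex_of_real q"
  have degP: "degree P = Suc (Suc m)" unfolding P_def using degq by (subst degree_map_poly) auto
  have P0: "P \<noteq> 0" using degP by auto
  have injc: "inj_on (\<lambda>i. complex_of_real (zs i)) {..<Suc (Suc m)}"
    using sorted_inj[OF zsrt] by (auto simp: inj_on_def)
  have rootsP: "\<forall>i<Suc (Suc m). poly P (complex_of_real (zs i)) = 0"
    using qroots unfolding P_def by (auto simp: poly_cor)
  have Pprod: "P = smult (lead_coeff P) (\<Prod>i<Suc (Suc m). [:- complex_of_real (zs i), 1:])"
    by (rule prod_roots[OF degP P0 injc rootsP])
  have lP: "lead_coeff P \<noteq> 0" using P0 by simp
  define Q where "Q = smult (lead_coeff P) (\<Prod>i<Suc (Suc m). [:- complex_of_real (zs i), 1:])"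
  have PQ: "P = Q" using Pprod by (simp only: Q_def)
  have part1: "\<forall>z::complex. poly P z = 0 \<longrightarrow> z \<in> \<real>"
  proof (intro allI impI)
    fix z :: complex assume "poly P z = 0"
    hence "poly Q z = 0" by (simp only: PQ)
    hence "\<exists>i<Suc (Suc m). z = complex_of_real (zs i)"
      unfolding Q_def by (simp only: prod_roots_zero_iff[OF lP])
    thus "z \<in> \<real>" by auto
  qed
  have part2: "\<forall>z::complex. poly P z = 0 \<longrightarrow> poly (pderiv P) z \<noteq> 0"
  proof (intro allI impI)
    fix z :: complex assume "poly P z = 0"
    hence "poly Q z = 0" by (simp only: PQ)
    hence "poly (pderiv Q) z \<noteq> 0" unfolding Q_def by (rule prod_roots_simple[OF lP injc])
    thus "poly (pderiv P) z \<noteq> 0" by (simp only: PQ) simp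
  qed
  have U: "{x. poly q x = 0} = zs ` {..<Suc (Suc m)}" using qroots by auto
  have V: "{x. poly (hermite (n - 1)) x = 0} = xs ` {..<Suc m}"
  proof -
    have "poly (hermite (n - 1)) x = 0 \<longleftrightarrow> (\<exists>i<Suc m. x = xs i)" for x
      using nm by (auto simp: hermite_def hx poly_prod prod_zero_iff less_Suc_eq)
    thus ?thesis by auto
  qed
  have part3: "interlaces (zs ` {..<Suc (Suc m)}) (xs ` {..<Suc m})"
    by (rule interlaces_from[OF sz sx zil]) simp
  show ?thesis using part1 part2 part3 U V unfolding P_def q_def by simp
qed

end
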